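(* Let $A=\mathrm{diag}(\mathbf{a})$ with $\mathbf{a}\in\mathbb{R}^n$, $\beta>0$, $f(\mathbf{z})=\frac12\mathbf{z}^*A\mathbf{z}+\frac{\beta}{2}\sum_k|z_k|^4$, let $W\in\mathbb{C}^{n\times n}$ be Hermitian and $\sigma>0$, and set $f_\sigma(\mathbf{z})=f(\mathbf{z})+\frac{\sigma}{2}\mathbf{z}^*W\mathbf{z}$. Suppose $\mathbf{z}_0$ is a global minimizer of $f$ on $\mathbb{CS}^{n-1}$ and $\mathbf{y}\in\mathbb{CS}^{n-1}$ satisfies $f_\sigma(\mathbf{y})\le\min_{\mathbf{z}\in\llbracket\mathbf{z}_0\rrbracket}f_\sigma(\mathbf{z})$. Then $\min_{\mathbf{z}\in\llbracket\mathbf{z}_0\rrbracket}\|\mathbf{y}-\mathbf{z}\|_4\le\sqrt[3]{2\sigma\beta^{-1}\|W\|_2\,n^{1/4}}$.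
   Context: $\mathbb{CS}^{n-1}$ is the unit sphere of $\mathbb{C}^n$; $\llbracket\mathbf{z}_0\rrbracket=\{\mathbf{y}\in\mathbb{C}^n:|y_k|=|(z_0)_k|\ \forall k\}$; $\|W\|_2$ is the spectral norm. *)

theory Defs
  imports "HOL-Analysis.Analysis"
begin

text \<open>Vectors in C^n are modelled as complex ^ 'n (n = CARD('n)); the Euclidean
  norm on this type is the usual 2-norm, so the unit sphere is norm z = 1.\<close>

definition hermitian :: "complex ^ 'n ^ 'n \<Rightarrow> bool" where
  "hermitian W \<longleftrightarrow> (\<forall>i j. W $ i $ j = cnj (W $ j $ i))"

definition qform :: "complex ^ 'n ^ 'n \<Rightarrow> complex ^ 'n \<Rightarrow> complex" where
  "qform W z = (\<Sum>i\<in>UNIV. \<Sum>j\<in>UNIV. cnj (z $ i) * W $ i $ j * z $ j)"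

definition fobj :: "real ^ 'n \<Rightarrow> real \<Rightarrow> complex ^ 'n \<Rightarrow> real" where
  "fobj a \<beta> z = (1/2) * (\<Sum>k\<in>UNIV. a $ k * (cmod (z $ k))^2)
                 + (\<beta>/2) * (\<Sum>k\<in>UNIV. (cmod (z $ k))^4)"

definition fsig :: "real ^ 'n \<Rightarrow> real \<Rightarrow> real \<Rightarrow> complex ^ 'n ^ 'n \<Rightarrow> complex ^ 'n \<Rightarrow> real" where
  "fsig a \<beta> \<sigma> W z = fobj a \<beta> z + (\<sigma>/2) * Re (qform W z)"

definition phase_class :: "complex ^ 'n \<Rightarrow> (complex ^ 'n) set" where
  "phase_class z0 = {y. \<forall>k. cmod (y $ k) = cmod (z0 $ k)}"

definition norm4 :: "complex ^ 'n \<Rightarrow> real" where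
  "norm4 x = (\<Sum>k\<in>UNIV. (cmod (x $ k))^4) powr (1/4)"

definition spec_norm :: "complex ^ 'n ^ 'n \<Rightarrow> real" where
  "spec_norm W = onorm (\<lambda>x. W *v x)"

end

theory Submission
  imports Defs
begin

lemma mv_bl: "bounded_linear (\<lambda>x::complex^'n. W *v x)"
proof -
  have "linear (\<lambda>x::complex^'n. W *v x)"
    by (rule linearI) (auto simp: matrix_vector_mult_def vec_eq_iff sum.distrib scaleR_sum_right algebra_simps)
  then show ?thesis by (simp add: linear_conv_bounded_linear)
qed

definition bil :: "complex ^ 'n ^ 'n \<Rightarrow> complex ^ 'n \<Rightarrow> complex ^ 'n \<Rightarrow> complex" where
  "bil W x w = (\<Sum>i\<in>UNIV. cnj (x $ i) * (W *v w) $ i)"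

lemma qform_bil: "qform W z = bil W z z"
  unfolding qform_def bil_def matrix_vector_mult_def
  by (simp add: sum_distrib_left mult.assoc)

lemma bil_bound: "cmod (bil W x w) \<le> norm x * norm (W *v w)"
proof -
  have "cmod (bil W x w) \<le> (\<Sum>i\<in>UNIV. cmod (cnj (x $ i) * (W *v w) $ i))"
    unfolding bil_def by (rule norm_sum)
  also have "\<dots> = (\<Sum>i\<in>UNIV. \<bar>cmod (x $ i)\<bar> * \<bar>cmod ((W *v w) $ i)\<bar>)"
    by (simp add: norm_mult)
  also have "\<dots> \<le> L2_set (\<lambda>i. cmod (x $ i)) UNIV * L2_set (\<lambda>i. cmod ((W *v w) $ i)) UNIV"
    by (rule L2_set_mult_ineq)
  also have "\<dots> = norm x * norm (W *v w)" by (simp add: norm_vec_def)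
  finally show ?thesis .
qed

lemma bil_split: "bil W z z - bil W y y = bil W (z - y) z + bil W y (z - y)"
proof -
  have "W *v (z - y) = W *v z - W *v y"
    by (simp add: matrix_vector_mult_diff_distrib)
  then show ?thesis
    unfolding bil_def by (simp add: sum_subtractf[symmetric] sum.distrib[symmetric] algebra_simps)
qed

lemma qdiff:
  assumes "norm (z::complex^'n) = 1" "norm y = 1"
  shows "Re (qform W z) - Re (qform W y) \<le> 2 * spec_norm W * norm (z - y)"
proof -
  have S: "norm (W *v x) \<le> spec_norm W * norm x" for x
    unfolding spec_norm_def by (rule onorm[OF mv_bl])
  have "Re (qform W z) - Re (qform W y) = Re (bil W z z - bil W y y)"
    by (simp add: qform_bil)
  also have "\<dots> \<le> cmod (bil W z z - bil W y y)" by (rule complex_Re_le_cmod)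
  also have "\<dots> \<le> cmod (bil W (z - y) z) + cmod (bil W y (z - y))"
    unfolding bil_split by (rule norm_triangle_ineq)
  also have "\<dots> \<le> norm (z - y) * (spec_norm W * norm z) + norm y * (spec_norm W * norm (z - y))"
    apply (rule add_mono)
    apply (rule order_trans[OF bil_bound], rule mult_left_mono[OF S], simp)
    apply (rule order_trans[OF bil_bound], rule mult_left_mono[OF S], simp)
    done
  also have "\<dots> = 2 * spec_norm W * norm (z - y)" using assms by simp
  finally show ?thesis .
qed


definition Gf :: "real ^ 'n \<Rightarrow> real \<Rightarrow> ('n \<Rightarrow> real) \<Rightarrow> real" where
  "Gf a \<beta> w = (\<Sum>k\<in>UNIV. a $ k * w k / 2 + \<beta> / 2 * (w k)^2)"

lemma fobj_Gf: "fobj a \<beta> z = Gf a \<beta> (\<lambda>k. (cmod (z $ k))^2)"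
  unfolding fobj_def Gf_def
  by (simp add: sum.distrib sum_distrib_left sum_divide_distrib power_mult[symmetric])

lemma Gf_expand:
  "Gf a \<beta> (\<lambda>k. v k + t * (u k - v k)) - Gf a \<beta> v
   = t * (\<Sum>k\<in>UNIV. (a $ k / 2 + \<beta> * v k) * (u k - v k))
     + \<beta> / 2 * t^2 * (\<Sum>k\<in>UNIV. (u k - v k)^2)"
proof -
  have "Gf a \<beta> (\<lambda>k. v k + t * (u k - v k)) - Gf a \<beta> v
     = (\<Sum>k\<in>UNIV. t * ((a $ k / 2 + \<beta> * v k) * (u k - v k)) + \<beta> / 2 * t^2 * (u k - v k)^2)"
    unfolding Gf_def sum_subtractf[symmetric]
    by (rule sum.cong) (auto simp: power2_eq_square field_simps)
  also have "\<dots> = t * (\<Sum>k\<in>UNIV. (a $ k / 2 + \<beta> * v k) * (u k - v k))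
     + \<beta> / 2 * t^2 * (\<Sum>k\<in>UNIV. (u k - v k)^2)"
    by (simp add: sum.distrib sum_distrib_left)
  finally show ?thesis .
qed

lemma lin_nonneg:
  fixes L Q b :: real
  assumes "b > 0" "Q \<ge> 0" and H: "\<forall>t. 0 < t \<and> t \<le> 1 \<longrightarrow> 0 \<le> t * L + b * t^2 * Q"
  shows "L \<ge> 0"
proof (rule ccontr)
  assume "\<not> L \<ge> 0"
  hence L: "L < 0" by simp
  define t where "t = min 1 (- L / (2 * b * Q + 1))"
  have "b * Q \<ge> 0" using assms by simp
  hence d: "2 * b * Q + 1 > 0" by linarith
  have t0: "0 < t" using L d by (simp add: t_def divide_neg_pos)
  have t1: "t \<le> 1" by (simp add: t_def)
  have "t \<le> - L / (2 * b * Q + 1)" by (simp add: t_def)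
  hence "t * (2 * b * Q + 1) \<le> - L / (2 * b * Q + 1) * (2 * b * Q + 1)"
    using d by (intro mult_right_mono) auto
  also have "\<dots> = - L" using d by simp
  finally have "t * (2 * b * Q + 1) \<le> - L" .
  moreover have "t * (2 * b * Q + 1) = 2 * (b * t * Q) + t" by (simp add: algebra_simps)
  moreover have "b * t * Q \<ge> 0" using assms t0 by simp
  ultimately have "b * t * Q < - L" using t0 by linarith
  hence "t * (L + b * t * Q) < 0" using t0 by (simp add: mult_pos_neg)
  moreover have "0 \<le> t * L + b * t^2 * Q" using H t0 t1 by blast
  ultimately show False by (simp add: power2_eq_square algebra_simps)
qed

lemma Gf_opt:
  fixes u v :: "'n::finite \<Rightarrow> real"
  assumes b: "\<beta> > 0" and u0: "\<forall>k. u k \<ge> 0" and v0: "\<forall>k. v k \<ge> 0"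
    and us: "(\<Sum>k\<in>UNIV. u k) = 1" and vs: "(\<Sum>k\<in>UNIV. v k) = 1"
    and opt: "\<forall>w. (\<forall>k. w k \<ge> 0) \<and> (\<Sum>k\<in>UNIV. w k) = 1 \<longrightarrow> Gf a \<beta> v \<le> Gf a \<beta> w"
  shows "Gf a \<beta> u - Gf a \<beta> v \<ge> \<beta> / 2 * (\<Sum>k\<in>UNIV. (u k - v k)^2)"
proof -
  define L where "L = (\<Sum>k\<in>UNIV. (a $ k / 2 + \<beta> * v k) * (u k - v k))"
  define Q where "Q = (\<Sum>k\<in>UNIV. (u k - v k)^2)"
  have Q0: "Q \<ge> 0" unfolding Q_def by (simp add: sum_nonneg)
  have "\<forall>t. 0 < t \<and> t \<le> 1 \<longrightarrow> 0 \<le> t * L + \<beta> / 2 * t^2 * Q"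
  proof (intro allI impI)
    fix t :: real assume t: "0 < t \<and> t \<le> 1"
    let ?w = "\<lambda>k. v k + t * (u k - v k)"
    have W0: "\<forall>k. ?w k \<ge> 0"
    proof
      fix k
      have "?w k = (1 - t) * v k + t * u k" by (simp add: algebra_simps)
      also have "\<dots> \<ge> 0" using t u0 v0 by (simp add: add_nonneg_nonneg)
      finally show "?w k \<ge> 0" .
    qed
    have "(\<Sum>k\<in>UNIV. ?w k) = (\<Sum>k\<in>UNIV. v k) + t * ((\<Sum>k\<in>UNIV. u k) - (\<Sum>k\<in>UNIV. v k))"
      by (simp add: sum.distrib flip: sum_distrib_left sum_subtractf)
    hence Ws: "(\<Sum>k\<in>UNIV. ?w k) = 1" using us vs by simp
    have "Gf a \<beta> v \<le> Gf a \<beta> ?w"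
      by (rule mp[OF spec[OF opt, of ?w]]) (rule conjI[OF W0 Ws])
    thus "0 \<le> t * L + \<beta> / 2 * t^2 * Q"
      using Gf_expand[of a \<beta> v t u] unfolding L_def Q_def by linarith
  qed
  hence "L \<ge> 0" using lin_nonneg[of "\<beta>/2" Q L] b Q0 by simp
  moreover have "Gf a \<beta> u - Gf a \<beta> v = L + \<beta> / 2 * Q"
    using Gf_expand[of a \<beta> v 1 u] unfolding L_def Q_def by simp
  ultimately show ?thesis unfolding Q_def by linarith
qed


lemma d4_le:
  fixes p q :: real
  assumes "p \<ge> 0" "q \<ge> 0"
  shows "\<bar>p - q\<bar>^4 \<le> (p^2 - q^2)^2"
proof -
  have "\<bar>p - q\<bar> \<le> p + q" using assms by linarith
  hence "\<bar>p - q\<bar> * \<bar>p - q\<bar> \<le> \<bar>p - q\<bar> * (p + q)" by (rule mult_left_mono) simp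
  also have "\<dots> = \<bar>(p - q) * (p + q)\<bar>" using assms by (simp add: abs_mult)
  also have "(p - q) * (p + q) = p^2 - q^2" by (simp add: power2_eq_square algebra_simps)
  finally have h: "\<bar>p - q\<bar>^2 \<le> \<bar>p^2 - q^2\<bar>" by (simp add: power2_eq_square)
  have "\<bar>p - q\<bar>^4 = (\<bar>p - q\<bar>^2)^2" by simp
  also have "\<dots> \<le> \<bar>p^2 - q^2\<bar>^2" by (rule power_mono[OF h]) simp
  also have "\<dots> = (p^2 - q^2)^2" by simp
  finally show ?thesis .
qed

lemma sum_sq_1:
  assumes "norm (x::complex^'n) = 1"
  shows "(\<Sum>k\<in>UNIV. (cmod (x $ k))^2) = 1"
proof -
  have "sqrt (\<Sum>k\<in>UNIV. (cmod (x $ k))^2) = 1" using assms by (simp add: norm_vec_def L2_set_def)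
  thus ?thesis by simp
qed

lemma powr4:
  fixes M :: real assumes "M \<ge> 0"
  shows "(M powr (1/4))^2 = sqrt M"
proof -
  have "(M powr (1/4))^2 = M powr (1/4) * M powr (1/4)" by (simp add: power2_eq_square)
  also have "\<dots> = M powr (1/2)" by (simp add: powr_add[symmetric])
  also have "\<dots> = sqrt M" using assms by (simp add: powr_half_sqrt)
  finally show ?thesis .
qed

theorem theorem7:
  fixes a :: "real ^ 'n" and \<beta> \<sigma> :: real and W :: "complex ^ 'n ^ 'n"
    and z0 y :: "complex ^ 'n"
  assumes "\<beta> > 0" and "hermitian W" and "\<sigma> > 0"
    and "norm z0 = 1" and "\<forall>z. norm z = 1 \<longrightarrow> fobj a \<beta> z0 \<le> fobj a \<beta> z"
    and "norm y = 1"
    and "\<forall>z\<in>phase_class z0. fsig a \<beta> \<sigma> W y \<le> fsig a \<beta> \<sigma> W z"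
  shows "(INF z\<in>phase_class z0. norm4 (y - z))
           \<le> root 3 (2 * \<sigma> / \<beta> * spec_norm W * real CARD('n) powr (1/4))"
proof -
  note b = assms(1) and sg = assms(3) and nz0 = assms(4) and zopt = assms(5)
    and ny = assms(6) and yopt = assms(7)
  define p where "p k = cmod (y $ k)" for k
  define q where "q k = cmod (z0 $ k)" for k
  define S where "S = spec_norm W"
  have S0: "S \<ge> 0" unfolding S_def spec_norm_def by (rule onorm_pos_le[OF mv_bl])
  define u where "u k = (p k)^2" for k
  define v where "v k = (q k)^2" for k
  have us: "(\<Sum>k\<in>UNIV. u k) = 1" unfolding u_def p_def by (rule sum_sq_1[OF ny])
  have vs: "(\<Sum>k\<in>UNIV. v k) = 1" unfolding v_def q_def by (rule sum_sq_1[OF nz0])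
  have fy: "fobj a \<beta> y = Gf a \<beta> u" unfolding u_def p_def by (rule fobj_Gf)
  have fz0: "fobj a \<beta> z0 = Gf a \<beta> v" unfolding v_def q_def by (rule fobj_Gf)
  have opt: "\<forall>w. (\<forall>k. w k \<ge> 0) \<and> (\<Sum>k\<in>UNIV. w k) = 1 \<longrightarrow> Gf a \<beta> v \<le> Gf a \<beta> w"
  proof (intro allI impI)
    fix w :: "'n \<Rightarrow> real" assume w: "(\<forall>k. w k \<ge> 0) \<and> (\<Sum>k\<in>UNIV. w k) = 1"
    define zw where "zw = (\<chi> k. complex_of_real (sqrt (w k)))"
    have mod: "(\<lambda>k. (cmod (zw $ k))^2) = w" using w by (auto simp: zw_def)
    have "norm zw = sqrt (\<Sum>k\<in>UNIV. (cmod (zw $ k))^2)" by (simp add: norm_vec_def L2_set_def)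
    also have "\<dots> = 1" unfolding mod using w by simp
    finally have "norm zw = 1" .
    hence "fobj a \<beta> z0 \<le> fobj a \<beta> zw" using zopt by blast
    moreover have "v = (\<lambda>k. (cmod (z0 $ k))^2)" by (simp add: fun_eq_iff v_def q_def)
    ultimately show "Gf a \<beta> v \<le> Gf a \<beta> w" by (simp add: fobj_Gf mod)
  qed
  have Gineq: "Gf a \<beta> u - Gf a \<beta> v \<ge> \<beta> / 2 * (\<Sum>k\<in>UNIV. (u k - v k)^2)"
    by (rule Gf_opt[OF b _ _ us vs opt]) (auto simp: u_def v_def)
  define ph where "ph k = (if y $ k = 0 then 1 else y $ k / complex_of_real (p k))" for k
  have ph1: "cmod (ph k) = 1" for k
    by (simp add: ph_def p_def norm_divide)
  have yph: "y $ k = complex_of_real (p k) * ph k" for k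
    by (simp add: ph_def p_def)
  define zz where "zz = (\<chi> k. complex_of_real (q k) * ph k)"
  have zzmod: "cmod (zz $ k) = q k" for k
    by (simp add: zz_def norm_mult ph1 q_def)
  have zzin: "zz \<in> phase_class z0" by (simp add: phase_class_def zzmod q_def)
  have nzz: "norm zz = 1" using nz0 by (simp add: norm_vec_def zzmod q_def)
  have dmod: "cmod ((y - zz) $ k) = \<bar>p k - q k\<bar>" for k
  proof -
    have "(y - zz) $ k = complex_of_real (p k - q k) * ph k"
      by (simp add: zz_def yph algebra_simps)
    thus ?thesis by (simp add: norm_mult ph1 flip: of_real_diff)
  qed
  have fzz: "fobj a \<beta> zz = fobj a \<beta> z0"
    by (simp add: fobj_Gf zzmod q_def)
  define M where "M = (\<Sum>k\<in>UNIV. \<bar>p k - q k\<bar>^4)"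
  define e where "e = M powr (1/4)"
  define c where "c = real CARD('n) powr (1/4)"
  have M0: "M \<ge> 0" unfolding M_def by (simp add: sum_nonneg)
  have e0: "e \<ge> 0" by (simp add: e_def)
  have c0: "c \<ge> 0" by (simp add: c_def)
  have e2: "e^2 = sqrt M" unfolding e_def by (rule powr4[OF M0])
  have c2: "c^2 = sqrt (real CARD('n))" unfolding c_def by (rule powr4) simp
  have e4: "e^4 = M"
  proof -
    have "e^4 = (e^2)^2" by simp
    also have "\<dots> = M" using M0 by (simp add: e2)
    finally show ?thesis .
  qed
  have n4: "norm4 (y - zz) = e" by (simp add: norm4_def dmod[simplified] e_def M_def)
  have MQ: "M \<le> (\<Sum>k\<in>UNIV. (u k - v k)^2)"
    unfolding M_def u_def v_def by (rule sum_mono) (rule d4_le, simp_all add: p_def q_def)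
  have nyzz2: "(norm (y - zz))^2 = (\<Sum>k\<in>UNIV. \<bar>p k - q k\<bar>^2)"
    by (simp add: norm_vec_def L2_set_def dmod[simplified] sum_nonneg)
  have "(\<Sum>k\<in>UNIV. \<bar>p k - q k\<bar>^2) = (\<Sum>k\<in>UNIV. \<bar>\<bar>p k - q k\<bar>^2\<bar> * \<bar>1::real\<bar>)" by simp
  also have "\<dots> \<le> L2_set (\<lambda>k. \<bar>p k - q k\<bar>^2) UNIV * L2_set (\<lambda>k::'n. 1::real) UNIV"
    using L2_set_mult_ineq[of "\<lambda>k. \<bar>p k - q k\<bar>^2" "\<lambda>k::'n. 1::real" UNIV] by simp
  also have "\<dots> = sqrt M * sqrt (real CARD('n))"
    by (simp add: L2_set_def M_def power_mult[symmetric])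
  also have "\<dots> = (e * c)^2" by (simp add: e2 c2 power_mult_distrib)
  finally have "(norm (y - zz))^2 \<le> (e * c)^2" using nyzz2 by simp
  hence nyzz: "norm (y - zz) \<le> e * c"
    by (rule power2_le_imp_le) (simp add: e0 c0)
  have "fsig a \<beta> \<sigma> W y \<le> fsig a \<beta> \<sigma> W zz" using yopt zzin by blast
  hence "fobj a \<beta> y - fobj a \<beta> z0 \<le> \<sigma> / 2 * (Re (qform W zz) - Re (qform W y))"
    by (simp add: fsig_def fzz algebra_simps)
  also have "\<dots> \<le> \<sigma> / 2 * (2 * S * norm (zz - y))"
    using qdiff[OF nzz ny, of W] sg by (simp add: S_def)
  also have "\<dots> = \<sigma> * S * norm (y - zz)" by (simp add: norm_minus_commute)
  also have "\<dots> \<le> \<sigma> * S * (e * c)"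
    using nyzz sg S0 by (simp add: mult_left_mono)
  finally have up: "fobj a \<beta> y - fobj a \<beta> z0 \<le> \<sigma> * S * (e * c)" .
  have low: "\<beta> / 2 * e^4 \<le> fobj a \<beta> y - fobj a \<beta> z0"
  proof -
    have "\<beta> / 2 * M \<le> \<beta> / 2 * (\<Sum>k\<in>UNIV. (u k - v k)^2)"
      using MQ b by (intro mult_left_mono) auto
    thus ?thesis using Gineq unfolding fy fz0 e4 by linarith
  qed
  define K where "K = 2 * \<sigma> / \<beta> * spec_norm W * real CARD('n) powr (1/4)"
  have K0: "K \<ge> 0" using b sg S0 unfolding K_def S_def by simp
  have eK: "e \<le> root 3 K"
  proof (cases "e = 0")
    case True thus ?thesis using K0 by simp
  next
    case False
    hence ep: "e > 0" using e0 by simp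
    have "e * (\<beta> / 2 * e^3) \<le> e * (\<sigma> * S * c)"
      using low up by (simp add: power_numeral_reduce algebra_simps)
    hence "\<beta> / 2 * e^3 \<le> \<sigma> * S * c" using ep by simp
    hence "e^3 \<le> K" using b unfolding K_def S_def c_def by (simp add: field_simps)
    hence "root 3 (e^3) \<le> root 3 K" by (rule real_root_le_mono[rotated]) simp
    moreover have "root 3 (e^3) = e" by (rule real_root_power_cancel) (simp_all add: e0)
    ultimately show ?thesis by linarith
  qed
  have bdd: "bdd_below ((\<lambda>z. norm4 (y - z)) ` phase_class z0)"
    by (rule bdd_belowI[of _ 0]) (auto simp: norm4_def)
  have "(INF z\<in>phase_class z0. norm4 (y - z)) \<le> norm4 (y - zz)"
    by (rule cINF_lower[OF bdd zzin])
  also have "\<dots> \<le> root 3 K" using n4 eK by simp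
  finally show ?thesis unfolding K_def .
qed

end
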